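(* Let $\tilde d\in C^1(\mathbb{R})$ satisfy $\tilde d(0)=0$, $\tilde d'(m)>d_0$ and $|\tilde d'(m)|\le d_1+d_2|m|^p$ for all $m\in\mathbb{R}$, for some constants $d_0>0$ and $d_1,d_2,p\ge 0$. Then for any $\tilde f,\tilde g\in L^2(0,1)$ and $\tilde h=(\tilde h(0),\tilde h(1))\in\mathbb{R}^2$ the stationary system $$\partial_x\tilde m(x)=\tilde f(x),\quad \partial_x\tilde p(x)+\tilde d(\tilde m(x))=\tilde g(x)\quad (x\in(0,1)),\qquad \tilde p(x)=\tilde h(x)\quad (x\in\{0,1\})$$ has a unique solution $(\tilde p,\tilde m)\in H^1(0,1)\times H^1(0,1)$, and there exists a constant $c>0$, independent of $\tilde d$ and of $\tilde f,\tilde g,\tilde h$, such that $$\|\tilde m\|_{H^1}\le \frac{c}{d_0}\big(\|\tilde g\|_{L^2}+|\tilde h|_1+d_1\|\tilde f\|_{L^2}+d_2\|\tilde f\|_{L^2}^{p+1}\big)+c\|\tilde f\|_{L^2}=:M,$$ $$\|\tilde p\|_{H^1}\le c\big(\|\tilde g\|_{L^2}+|\tilde h|_1+d_1M+d_2M^{p+1}\big).$$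
   Context: $|\tilde h|_1=|\tilde h(0)|+|\tilde h(1)|$ denotes the $\ell^1$-norm on $\mathbb{R}^2$. $L^2$ and $H^1$ denote the usual Lebesgue and Sobolev spaces on $(0,1)$. *)

theory Defs
  imports "HOL-Analysis.Analysis"
begin

text \<open>Functions on (0,1) are represented by functions real => real; only values on [0,1] matter.\<close>

definition L2_01 :: "(real \<Rightarrow> real) \<Rightarrow> bool" where
  "L2_01 f \<longleftrightarrow> set_borel_measurable lborel {0..1} f
                \<and> set_integrable lborel {0..1} (\<lambda>x. (f x)\<^sup>2)"

definition L2_norm :: "(real \<Rightarrow> real) \<Rightarrow> real" where
  "L2_norm f = sqrt (LINT x:{0..1}|lborel. (f x)\<^sup>2)"

text \<open>v is the weak derivative of u on (0,1), u being (the absolutely continuous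
  representative of) an H^1 function: v in L^2 and u x = u 0 + int_0^x v for x in [0,1].\<close>
definition weak_deriv_01 :: "(real \<Rightarrow> real) \<Rightarrow> (real \<Rightarrow> real) \<Rightarrow> bool" where
  "weak_deriv_01 u v \<longleftrightarrow> L2_01 v \<and>
     (\<forall>x\<in>{0..1}. u x = u 0 + (LINT t:{0..x}|lborel. v t))"

definition H1_01 :: "(real \<Rightarrow> real) \<Rightarrow> bool" where
  "H1_01 u \<longleftrightarrow> (\<exists>v. weak_deriv_01 u v)"

definition H1_norm :: "(real \<Rightarrow> real) \<Rightarrow> real" where
  "H1_norm u = sqrt ((L2_norm u)\<^sup>2 + (L2_norm (SOME v. weak_deriv_01 u v))\<^sup>2)"

text \<open>Real power with the convention 0^0 = 1 (Isabelle's powr has 0 powr 0 = 0).\<close>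
definition rpow :: "real \<Rightarrow> real \<Rightarrow> real" where
  "rpow x a = (if a = 0 then 1 else x powr a)"

end

theory Submission
  imports Defs
begin


lemma abs_le_1_sq: "\<bar>y::real\<bar> \<le> 1 + y^2"
proof -
  have "0 \<le> (\<bar>y\<bar> - 1)^2" by simp
  then have "0 \<le> \<bar>y\<bar>*\<bar>y\<bar> - 2*\<bar>y\<bar> + 1" by (simp add: power2_eq_square algebra_simps)
  moreover have "\<bar>y\<bar>*\<bar>y\<bar> = y^2" by (simp add: power2_eq_square)
  ultimately show ?thesis by linarith
qed

lemma L2_set_integrable:
  assumes "L2_01 f" shows "set_integrable lborel {0..1::real} f"
proof -
  have m: "set_borel_measurable lborel {0..1} f" and i2: "set_integrable lborel {0..1} (\<lambda>x. (f x)\<^sup>2)"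
    using assms unfolding L2_01_def by auto
  have i1: "set_integrable lborel {0..1::real} (\<lambda>x. 1::real)"
    by (simp add: set_integrable_def integrable_real_indicator emeasure_lborel_Icc)
  have i3: "set_integrable lborel {0..1::real} (\<lambda>x. 1 + (f x)\<^sup>2)"
    using set_integral_add(1)[OF i1 i2] by simp
  show ?thesis unfolding set_integrable_def
  proof (rule Bochner_Integration.integrable_bound)
    show "integrable lborel (\<lambda>x. indicator {0..1::real} x *\<^sub>R (1 + (f x)\<^sup>2))"
      using i3 unfolding set_integrable_def .
    show "(\<lambda>x. indicator {0..1::real} x *\<^sub>R f x) \<in> borel_measurable lborel"
      using m unfolding set_borel_measurable_def .
    show "AE x in lborel. norm (indicator {0..1::real} x *\<^sub>R f x) \<le> norm (indicator {0..1::real} x *\<^sub>R (1 + (f x)\<^sup>2))"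
    proof (rule AE_I2)
      fix x
      have "\<bar>f x\<bar> \<le> 1 + (f x)\<^sup>2" by (rule abs_le_1_sq)
      then show "norm (indicator {0..1::real} x *\<^sub>R f x) \<le> norm (indicator {0..1::real} x *\<^sub>R (1 + (f x)\<^sup>2))"
        by (auto simp: indicator_def)
    qed
  qed
qed

lemma cont_set_integrable:
  fixes k :: "real \<Rightarrow> real"
  assumes "continuous_on {a..b::real} k" shows "set_integrable lborel {a..b} k"
  unfolding set_integrable_def using borel_integrable_compact[of "{a..b}" k] assms by auto

lemma set_integral_const_Icc:
  assumes "a \<le> (b::real)" shows "(LINT x:{a..b}|lborel. (c::real)) = (b - a) * c"
  using assms by (simp add: set_integral_const emeasure_lborel_Icc measure_lborel_Icc)

lemma L1_le_L2:
  assumes "L2_01 u" shows "(LINT x:{0..1}|lborel. \<bar>u x\<bar>) \<le> L2_norm u"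
proof -
  define I1 where "I1 = (LINT x:{0..1}|lborel. \<bar>u x\<bar>)"
  define I2 where "I2 = (LINT x:{0..1}|lborel. (u x)\<^sup>2)"
  have iu: "set_integrable lborel {0..1} u" by (rule L2_set_integrable[OF assms])
  have i1: "set_integrable lborel {0..1} (\<lambda>x. \<bar>u x\<bar>)" by (rule set_integrable_abs[OF iu])
  have i2: "set_integrable lborel {0..1} (\<lambda>x. (u x)\<^sup>2)" using assms unfolding L2_01_def by auto
  have I2nn: "0 \<le> I2" unfolding I2_def set_lebesgue_integral_def by (rule Bochner_Integration.integral_nonneg) (auto simp: indicator_def)
  have key: "2 * e * I1 \<le> I2 + e\<^sup>2" if e: "e > 0" for e :: real
  proof -
    have ic: "set_integrable lborel {0..1::real} (\<lambda>x. e\<^sup>2)" by (rule cont_set_integrable) simp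
    have "(LINT x:{0..1}|lborel. 2 * e * \<bar>u x\<bar>) \<le> (LINT x:{0..1}|lborel. (u x)\<^sup>2 + e\<^sup>2)"
    proof (rule set_integral_mono)
      show "set_integrable lborel {0..1} (\<lambda>x. 2 * e * \<bar>u x\<bar>)" using i1 by simp
      show "set_integrable lborel {0..1} (\<lambda>x. (u x)\<^sup>2 + e\<^sup>2)" using i2 ic by simp
      fix x
      have "0 \<le> (\<bar>u x\<bar> - e)\<^sup>2" by simp
      then show "2 * e * \<bar>u x\<bar> \<le> (u x)\<^sup>2 + e\<^sup>2"
        by (simp add: power2_eq_square algebra_simps abs_mult_self_eq)
    qed
    also have "\<dots> = I2 + e\<^sup>2" unfolding I2_def using i2 ic by (simp add: set_integral_const_Icc)
    finally show ?thesis unfolding I1_def by simp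
  qed
  have "I1 \<le> sqrt I2"
  proof (cases "I2 = 0")
    case True
    have "I1 \<le> 0 + e" if "e > 0" for e
      using key[of "2*e"] that True by (simp add: power2_eq_square)
    then have "I1 \<le> 0" by (rule field_le_epsilon)
    then show ?thesis using True by simp
  next
    case False
    then have s: "sqrt I2 > 0" using I2nn by simp
    have "2 * sqrt I2 * I1 \<le> I2 + (sqrt I2)\<^sup>2"
      using key[OF s] by simp
    also have "\<dots> = 2 * sqrt I2 * sqrt I2" using I2nn by (simp add: power2_eq_square)
    finally have "sqrt I2 * I1 \<le> sqrt I2 * sqrt I2" by simp
    then show ?thesis using s mult_le_cancel_left_pos by blast
  qed
  then show ?thesis unfolding I1_def I2_def L2_norm_def .
qed

lemma ennreal_eq_neg_imp: "ennreal (y::real) = ennreal (- y) \<Longrightarrow> y = 0"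
  by (cases "y \<ge> 0") (auto simp: ennreal_neg)

lemma nn_pos_neg_eq:
  fixes h :: "real \<Rightarrow> real"
  assumes ih: "integrable lborel h" and z: "(\<integral>x. h x \<partial>lborel) = 0"
  shows "(\<integral>\<^sup>+x. ennreal (h x) \<partial>lborel) = (\<integral>\<^sup>+x. ennreal (- h x) \<partial>lborel)"
proof -
  have ip: "integrable lborel (\<lambda>x. max 0 (h x))" using ih by auto
  have in': "integrable lborel (\<lambda>x. max 0 (- h x))" using ih by auto
  have e: "ennreal (max 0 y) = ennreal y" for y :: real
    by (cases "y \<ge> 0") (auto simp: ennreal_neg max_def)
  have "(\<integral>\<^sup>+x. ennreal (h x) \<partial>lborel) = (\<integral>\<^sup>+x. ennreal (max 0 (h x)) \<partial>lborel)"
    by (simp add: e)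
  also have "\<dots> = ennreal (\<integral>x. max 0 (h x) \<partial>lborel)"
    by (rule nn_integral_eq_integral[OF ip]) auto
  also have "(\<integral>x. max 0 (h x) \<partial>lborel) = (\<integral>x. max 0 (- h x) \<partial>lborel)"
  proof -
    have "(\<integral>x. h x \<partial>lborel) = (\<integral>x. max 0 (h x) - max 0 (- h x) \<partial>lborel)"
      by (rule Bochner_Integration.integral_cong) (auto simp: max_def)
    also have "\<dots> = (\<integral>x. max 0 (h x) \<partial>lborel) - (\<integral>x. max 0 (- h x) \<partial>lborel)"
      by (rule Bochner_Integration.integral_diff[OF ip in'])
    finally show ?thesis using z by simp
  qed
  also have "ennreal (\<integral>x. max 0 (- h x) \<partial>lborel) = (\<integral>\<^sup>+x. ennreal (max 0 (- h x)) \<partial>lborel)"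
    by (rule nn_integral_eq_integral[OF in', symmetric]) auto
  also have "\<dots> = (\<integral>\<^sup>+x. ennreal (- h x) \<partial>lborel)"
    by (simp add: e)
  finally show ?thesis .
qed

lemma AE_zero_of_intervals:
  fixes W :: "real \<Rightarrow> real"
  assumes iW: "set_integrable lborel {0..1} W"
    and z: "\<forall>x\<in>{0..1}. (LINT t:{0..x}|lborel. W t) = 0"
  shows "AE x in lborel. x \<in> {0..1} \<longrightarrow> W x = 0"
proof -
  define Wt where "Wt x = indicator {0..1::real} x * W x" for x
  have iWt: "integrable lborel Wt" using iW unfolding set_integrable_def Wt_def by simp
  have mWt[measurable]: "Wt \<in> borel_measurable lborel" using iWt by auto
  have tail: "(\<integral>x. Wt x * indicator {a<..} x \<partial>lborel) = 0" for a :: real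
  proof (cases "a < 0")
    case True
    have "(\<integral>x. Wt x * indicator {a<..} x \<partial>lborel) = (LINT t:{0..1}|lborel. W t)"
      unfolding set_lebesgue_integral_def Wt_def using True
      by (intro Bochner_Integration.integral_cong) (auto simp: indicator_def)
    then show ?thesis using z by auto
  next
    case False
    show ?thesis
    proof (cases "a \<ge> 1")
      case True
      have "(\<lambda>x. Wt x * indicator {a<..} x) = (\<lambda>x. 0::real)"
        unfolding Wt_def using True by (auto simp: indicator_def fun_eq_iff)
      then show ?thesis by simp
    next
      case a1: False
      have "(\<integral>x. Wt x * indicator {a<..} x \<partial>lborel) = (LINT t:{a<..1}|lborel. W t)"
        unfolding set_lebesgue_integral_def Wt_def using False a1
        by (intro Bochner_Integration.integral_cong) (auto simp: indicator_def)
      moreover have "(LINT t:{0..1}|lborel. W t) = (LINT t:{0..a}|lborel. W t) + (LINT t:{a<..1}|lborel. W t)"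
      proof -
        have "{0..1::real} = {0..a} \<union> {a<..1}" using False a1 by auto
        moreover have "(LINT t:{0..a} \<union> {a<..1}|lborel. W t) = (LINT t:{0..a}|lborel. W t) + (LINT t:{a<..1}|lborel. W t)"
          by (rule set_integral_Un) (use False a1 in \<open>auto intro: set_integrable_subset[OF iW]\<close>)
        ultimately show ?thesis by simp
      qed
      moreover have "(LINT t:{0..1}|lborel. W t) = 0" "(LINT t:{0..a}|lborel. W t) = 0"
        using z False a1 by auto
      ultimately show ?thesis by simp
    qed
  qed
  have nn: "(\<integral>\<^sup>+x. ennreal (Wt x) * indicator {a<..} x \<partial>lborel) = (\<integral>\<^sup>+x. ennreal (- Wt x) * indicator {a<..} x \<partial>lborel)" for a :: real
  proof -
    have "(\<integral>\<^sup>+x. ennreal (Wt x * indicator {a<..} x) \<partial>lborel) = (\<integral>\<^sup>+x. ennreal (- (Wt x * indicator {a<..} x)) \<partial>lborel)"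
      by (rule nn_pos_neg_eq[OF _ tail]) (rule integrable_real_mult_indicator[OF _ iWt], simp)
    moreover have "(\<integral>\<^sup>+x. ennreal (Wt x) * indicator {a<..} x \<partial>lborel) = (\<integral>\<^sup>+x. ennreal (Wt x * indicator {a<..} x) \<partial>lborel)"
      by (rule nn_integral_cong) (simp split: split_indicator)
    moreover have "(\<integral>\<^sup>+x. ennreal (- Wt x) * indicator {a<..} x \<partial>lborel) = (\<integral>\<^sup>+x. ennreal (- (Wt x * indicator {a<..} x)) \<partial>lborel)"
      by (rule nn_integral_cong) (simp split: split_indicator)
    ultimately show ?thesis by simp
  qed
  have finW: "(\<integral>\<^sup>+x. ennreal (Wt x) \<partial>lborel) < \<infinity>"
    using integrableD(2)[OF iWt] by (simp add: less_top)
  have "density lborel (\<lambda>x. ennreal (Wt x)) = density lborel (\<lambda>x. ennreal (- Wt x))"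
  proof (rule measure_eqI_lessThan)
    show "sets (density lborel (\<lambda>x. ennreal (Wt x))) = sets borel" by simp
    show "sets (density lborel (\<lambda>x. ennreal (- Wt x))) = sets borel" by simp
    fix x :: real
    show "emeasure (density lborel (\<lambda>x. ennreal (Wt x))) {x<..} < \<infinity>"
    proof -
      have "emeasure (density lborel (\<lambda>x. ennreal (Wt x))) {x<..} = (\<integral>\<^sup>+t. ennreal (Wt t) * indicator {x<..} t \<partial>lborel)"
        by (rule emeasure_density) auto
      also have "\<dots> \<le> (\<integral>\<^sup>+t. ennreal (Wt t) \<partial>lborel)"
        by (rule nn_integral_mono) (auto simp: indicator_def)
      finally show ?thesis using finW by (simp add: le_less_trans)
    qed
    show "emeasure (density lborel (\<lambda>x. ennreal (Wt x))) {x<..} = emeasure (density lborel (\<lambda>x. ennreal (- Wt x))) {x<..}"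
      by (simp add: emeasure_density nn)
  qed
  then have "AE x in lborel. ennreal (Wt x) = ennreal (- Wt x)"
    using finite_density_unique[of "\<lambda>x. ennreal (Wt x)" lborel "\<lambda>x. ennreal (- Wt x)"] finW
    by auto
  then show ?thesis
  proof (rule AE_mp, intro AE_I2 impI)
    fix x assume "ennreal (Wt x) = ennreal (- Wt x)" "x \<in> {0..1::real}"
    then show "W x = 0" using ennreal_eq_neg_imp[of "Wt x"] unfolding Wt_def by auto
  qed
qed

lemma sub_integrable:
  assumes "set_integrable lborel {0..1} (u::real\<Rightarrow>real)" "x \<in> {0..1::real}"
  shows "set_integrable lborel {0..x} u"
  by (rule set_integrable_subset[OF assms(1)]) (use assms(2) in auto)

lemma LINT_zero_pt: "(LINT t:{0..0::real}|lborel. (u::real\<Rightarrow>real) t) = 0"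
proof -
  have eq: "(\<lambda>x. indicator {0..0::real} x *\<^sub>R u x) = (\<lambda>x. u 0 * indicator {0} x)"
    by (auto simp: indicator_def fun_eq_iff)
  have "(LINT t:{0..0::real}|lborel. u t) = (\<integral>x. u 0 * indicator {0::real} x \<partial>lborel)"
    unfolding set_lebesgue_integral_def eq by (rule refl)
  also have "\<dots> = u 0 * measure lborel {0::real}"
    by (subst integral_mult_right_zero) simp
  finally show ?thesis by simp
qed

lemma indef_cont:
  assumes "set_integrable lborel {0..1} (u::real\<Rightarrow>real)"
  shows "continuous_on {0..1} (\<lambda>x. LINT t:{0..x}|lborel. u t)"
proof -
  have "u integrable_on {0..1}" using set_borel_integral_eq_integral(1)[OF assms] .
  then have c: "continuous_on {0..1} (\<lambda>x. integral {0..x} u)" by (rule indefinite_integral_continuous_1)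
  have eq: "integral {0..x} u = (LINT t:{0..x}|lborel. u t)" if "x \<in> {0..1}" for x
    using set_borel_integral_eq_integral(2)[OF sub_integrable[OF assms that]] by simp
  show ?thesis by (rule continuous_on_eq[OF c eq])
qed

lemma indef_bound:
  assumes iu: "set_integrable lborel {0..1} (u::real\<Rightarrow>real)" and x: "x \<in> {0..1::real}"
  shows "\<bar>LINT t:{0..x}|lborel. u t\<bar> \<le> (LINT t:{0..1}|lborel. \<bar>u t\<bar>)"
proof -
  have ix: "set_integrable lborel {0..x} u" by (rule sub_integrable[OF iu x])
  have "\<bar>LINT t:{0..x}|lborel. u t\<bar> \<le> (LINT t:{0..x}|lborel. \<bar>u t\<bar>)"
    using ix unfolding set_lebesgue_integral_def set_integrable_def
    using integral_norm_bound[of lborel "\<lambda>t. indicator {0..x} t *\<^sub>R u t"]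
    by (simp add: abs_mult)
  also have "\<dots> \<le> (LINT t:{0..1}|lborel. \<bar>u t\<bar>)"
    unfolding set_lebesgue_integral_def
    apply (rule integral_mono)
    using set_integrable_abs[OF ix] set_integrable_abs[OF iu] unfolding set_integrable_def apply auto[2]
    using x by (auto simp: indicator_def)
  finally show ?thesis .
qed

lemma wd_unique_norm:
  assumes "weak_deriv_01 u v" "weak_deriv_01 u w"
  shows "L2_norm v = L2_norm w"
proof -
  have lv: "L2_01 v" using assms(1) unfolding weak_deriv_01_def by blast
  have lw: "L2_01 w" using assms(2) unfolding weak_deriv_01_def by blast
  have iv: "set_integrable lborel {0..1} v" and iw: "set_integrable lborel {0..1} w"
    using L2_set_integrable lv lw by blast+
  have "AE x in lborel. x \<in> {0..1} \<longrightarrow> v x - w x = 0"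
  proof (rule AE_zero_of_intervals)
    show "set_integrable lborel {0..1} (\<lambda>x. v x - w x)" using iv iw by auto
    show "\<forall>x\<in>{0..1}. (LINT t:{0..x}|lborel. v t - w t) = 0"
    proof
      fix x :: real assume x: "x \<in> {0..1}"
      have "(LINT t:{0..x}|lborel. v t - w t) = (LINT t:{0..x}|lborel. v t) - (LINT t:{0..x}|lborel. w t)"
        using sub_integrable[OF iv x] sub_integrable[OF iw x] by simp
      also have "\<dots> = 0"
      proof -
        have "u x = u 0 + (LINT t:{0..x}|lborel. v t)" using assms(1) x unfolding weak_deriv_01_def by blast
        moreover have "u x = u 0 + (LINT t:{0..x}|lborel. w t)" using assms(2) x unfolding weak_deriv_01_def by blast
        ultimately show ?thesis by simp
      qed
      finally show "(LINT t:{0..x}|lborel. v t - w t) = 0" .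
    qed
  qed
  have mv: "(\<lambda>x. indicator {0..1::real} x *\<^sub>R (v x)\<^sup>2) \<in> borel_measurable lborel"
    using lv unfolding L2_01_def set_integrable_def by auto
  have mw: "(\<lambda>x. indicator {0..1::real} x *\<^sub>R (w x)\<^sup>2) \<in> borel_measurable lborel"
    using lw unfolding L2_01_def set_integrable_def by auto
  have "(LINT x:{0..1}|lborel. (v x)\<^sup>2) = (LINT x:{0..1}|lborel. (w x)\<^sup>2)"
    unfolding set_lebesgue_integral_def
    proof (rule integral_cong_AE[OF mv mw])
    show "AE x in lborel. indicator {0..1::real} x *\<^sub>R (v x)\<^sup>2 = indicator {0..1::real} x *\<^sub>R (w x)\<^sup>2"
      using \<open>AE x in lborel. x \<in> {0..1} \<longrightarrow> v x - w x = 0\<close>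
      by (rule AE_mp) (rule AE_I2, simp add: indicator_def)
  qed
  then show ?thesis unfolding L2_norm_def by simp
qed

lemma C1_deriv:
  assumes "d C1_differentiable_on UNIV"
  shows "(d has_real_derivative deriv d s) (at s)"
proof -
  obtain D where D: "\<forall>x\<in>UNIV. (d has_vector_derivative (D x)) (at x)"
    using assms unfolding C1_differentiable_on_def by blast
  then have "(d has_real_derivative D s) (at s)"
    by (simp add: has_real_derivative_iff_has_vector_derivative)
  moreover then have "deriv d s = D s" by (rule DERIV_imp_deriv)
  ultimately show ?thesis by simp
qed

lemma rpow_mono: "0 \<le> x \<Longrightarrow> x \<le> y \<Longrightarrow> 0 \<le> p \<Longrightarrow> rpow x p \<le> rpow y p"
  unfolding rpow_def by (auto intro: powr_mono2)

lemma rpow_nonneg: "0 \<le> rpow x p"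
  unfolding rpow_def by auto

lemma d_lower:
  assumes dd: "\<And>s. (d has_real_derivative deriv d s) (at s)" and lo: "\<forall>s. deriv d s > d0"
    and ab: "a \<le> b"
  shows "d b - d a \<ge> d0 * (b - a)"
proof (cases "a = b")
  case True then show ?thesis by simp
next
  case False
  then have "a < b" using ab by simp
  then obtain z where "d b - d a = (b - a) * deriv d z"
    using MVT2[of a b d "deriv d"] dd by blast
  moreover have "d0 * (b - a) \<le> deriv d z * (b - a)"
    using lo \<open>a < b\<close> by (intro mult_right_mono) (auto simp: less_imp_le)
  ultimately show ?thesis by (simp add: mult.commute)
qed

lemma d_lip:
  assumes dd: "\<And>s. (d has_real_derivative deriv d s) (at s)"
    and bd: "\<forall>s. \<bar>deriv d s\<bar> \<le> d1 + d2 * rpow \<bar>s\<bar> p" and d2: "d2 \<ge> 0" and p: "p \<ge> 0"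
    and a: "\<bar>a\<bar> \<le> R" and b: "\<bar>b\<bar> \<le> R"
  shows "\<bar>d a - d b\<bar> \<le> (d1 + d2 * rpow R p) * \<bar>a - b\<bar>"
proof -
  have main: "\<bar>d v - d u\<bar> \<le> (d1 + d2 * rpow R p) * \<bar>v - u\<bar>" if uv: "u < v" "\<bar>u\<bar> \<le> R" "\<bar>v\<bar> \<le> R" for u v
  proof -
    obtain z where z: "u < z" "z < v" "d v - d u = (v - u) * deriv d z"
      using MVT2[of u v d "deriv d"] dd uv by blast
    have zR: "\<bar>z\<bar> \<le> R" using z uv by auto
    have "\<bar>deriv d z\<bar> \<le> d1 + d2 * rpow \<bar>z\<bar> p" using bd by blast
    also have "\<dots> \<le> d1 + d2 * rpow R p"
      using rpow_mono[OF _ zR p] d2 by (simp add: mult_left_mono)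
    finally have "\<bar>deriv d z\<bar> \<le> d1 + d2 * rpow R p" .
    then have "\<bar>v - u\<bar> * \<bar>deriv d z\<bar> \<le> \<bar>v - u\<bar> * (d1 + d2 * rpow R p)"
      by (intro mult_left_mono) auto
    then show ?thesis using z by (simp add: abs_mult mult.commute)
  qed
  show ?thesis
  proof (cases a b rule: linorder_cases)
    case less then show ?thesis using main[of a b] a b by (simp add: abs_minus_commute)
  next
    case equal then show ?thesis by simp
  next
    case greater then show ?thesis using main[of b a] a b by simp
  qed
qed

lemma d_growth:
  assumes dd: "\<And>s. (d has_real_derivative deriv d s) (at s)"
    and bd: "\<forall>s. \<bar>deriv d s\<bar> \<le> d1 + d2 * rpow \<bar>s\<bar> p" and d2: "d2 \<ge> 0" and p: "p \<ge> 0"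
    and d00: "d 0 = 0"
  shows "\<bar>d s\<bar> \<le> d1 * \<bar>s\<bar> + d2 * \<bar>s\<bar> powr (p + 1)"
proof -
  have "\<bar>d s - d 0\<bar> \<le> (d1 + d2 * rpow \<bar>s\<bar> p) * \<bar>s - 0\<bar>"
    by (rule d_lip[OF dd bd d2 p]) auto
  moreover have "rpow \<bar>s\<bar> p * \<bar>s\<bar> = \<bar>s\<bar> powr (p + 1)"
  proof (cases "p = 0")
    case True then show ?thesis by (simp add: rpow_def)
  next
    case False
    show ?thesis
    proof (cases "s = 0")
      case True then show ?thesis using False by (simp add: rpow_def)
    next
      case False
      then show ?thesis using \<open>p \<noteq> 0\<close> by (simp add: rpow_def powr_add)
    qed
  qed
  ultimately show ?thesis using d00 by (simp add: algebra_simps)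
qed

lemma int_sq_nonneg: "0 \<le> (LINT x:{0..1::real}|lborel. ((u x)::real)\<^sup>2)"
  unfolding set_lebesgue_integral_def by (rule Bochner_Integration.integral_nonneg) (auto simp: indicator_def)

lemma L2_norm_nonneg: "0 \<le> L2_norm u"
  unfolding L2_norm_def using int_sq_nonneg by simp

lemma L2_sq:
  assumes "L2_01 u" shows "(L2_norm u)\<^sup>2 = (LINT x:{0..1}|lborel. (u x)\<^sup>2)"
  unfolding L2_norm_def using int_sq_nonneg by simp

lemma L2_norm_le_bound:
  assumes "\<forall>x\<in>{0..1::real}. \<bar>k x\<bar> \<le> B" "0 \<le> B"
  shows "L2_norm k \<le> B"
proof -
  have "(LINT x:{0..1}|lborel. (k x)\<^sup>2) \<le> B\<^sup>2"
  proof (cases "set_integrable lborel {0..1::real} (\<lambda>x. (k x)\<^sup>2)")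
    case ik: True
    have "(LINT x:{0..1}|lborel. (k x)\<^sup>2) \<le> (LINT x:{0..1::real}|lborel. B\<^sup>2)"
    proof (rule set_integral_mono)
      show "set_integrable lborel {0..1::real} (\<lambda>x. (k x)\<^sup>2)" by (rule ik)
      show "set_integrable lborel {0..1::real} (\<lambda>x. B\<^sup>2)" by (rule cont_set_integrable) simp
      fix x :: real assume "x \<in> {0..1}"
      then have "\<bar>k x\<bar> \<le> B" using assms by auto
      then show "(k x)\<^sup>2 \<le> B\<^sup>2" by (metis abs_ge_zero power2_abs power_mono)
    qed
    also have "\<dots> = B\<^sup>2" by (simp add: set_integral_const_Icc)
    finally show ?thesis .
  next
    case False
    then have "(LINT x:{0..1}|lborel. (k x)\<^sup>2) = 0"
      unfolding set_lebesgue_integral_def set_integrable_def by (rule not_integrable_integral_eq)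
    then show ?thesis by simp
  qed
  then have "sqrt (LINT x:{0..1}|lborel. (k x)\<^sup>2) \<le> sqrt (B\<^sup>2)" by (rule real_sqrt_le_mono)
  then show ?thesis unfolding L2_norm_def using assms(2) by simp
qed

lemma L2_diff_cont:
  assumes g: "L2_01 g" and k: "continuous_on {0..1} k"
  shows "L2_01 (\<lambda>x. g x - k x)"
proof -
  have mg: "(\<lambda>x. indicator {0..1::real} x *\<^sub>R g x) \<in> borel_measurable lborel"
    using g unfolding L2_01_def set_borel_measurable_def by auto
  have ik: "set_integrable lborel {0..1} k" by (rule cont_set_integrable[OF k])
  have mk: "(\<lambda>x. indicator {0..1::real} x *\<^sub>R k x) \<in> borel_measurable lborel"
    using ik unfolding set_integrable_def by auto
  have m: "(\<lambda>x. indicator {0..1::real} x *\<^sub>R (g x - k x)) \<in> borel_measurable lborel"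
  proof -
    have "(\<lambda>x. indicator {0..1::real} x *\<^sub>R (g x - k x)) = (\<lambda>x. indicator {0..1::real} x *\<^sub>R g x - indicator {0..1::real} x *\<^sub>R k x)"
      by (simp add: fun_eq_iff algebra_simps)
    then show ?thesis using mg mk by simp
  qed
  have ig2: "set_integrable lborel {0..1} (\<lambda>x. (g x)\<^sup>2)" using g unfolding L2_01_def by auto
  have ik2: "set_integrable lborel {0..1} (\<lambda>x. (k x)\<^sup>2)"
    by (rule cont_set_integrable) (intro continuous_intros k)
  have ib: "set_integrable lborel {0..1} (\<lambda>x. 2 * (g x)\<^sup>2 + 2 * (k x)\<^sup>2)"
    using ig2 ik2 by simp
  have "set_integrable lborel {0..1} (\<lambda>x. (g x - k x)\<^sup>2)"
    unfolding set_integrable_def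
  proof (rule Bochner_Integration.integrable_bound)
    show "integrable lborel (\<lambda>x. indicator {0..1::real} x *\<^sub>R (2 * (g x)\<^sup>2 + 2 * (k x)\<^sup>2))"
      using ib unfolding set_integrable_def .
    have "(\<lambda>x. indicator {0..1::real} x *\<^sub>R (g x - k x)\<^sup>2) = (\<lambda>x. (indicator {0..1::real} x *\<^sub>R (g x - k x))\<^sup>2)"
      by (auto simp: fun_eq_iff indicator_def)
    then show "(\<lambda>x. indicator {0..1::real} x *\<^sub>R (g x - k x)\<^sup>2) \<in> borel_measurable lborel"
      using m by simp
    show "AE x in lborel. norm (indicator {0..1::real} x *\<^sub>R (g x - k x)\<^sup>2) \<le> norm (indicator {0..1::real} x *\<^sub>R (2 * (g x)\<^sup>2 + 2 * (k x)\<^sup>2))"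
    proof (rule AE_I2)
      fix x
      have "0 \<le> (g x + k x)\<^sup>2" by simp
      then have "(g x - k x)\<^sup>2 \<le> 2 * (g x)\<^sup>2 + 2 * (k x)\<^sup>2" by (simp add: power2_eq_square algebra_simps)
      then show "norm (indicator {0..1::real} x *\<^sub>R (g x - k x)\<^sup>2) \<le> norm (indicator {0..1::real} x *\<^sub>R (2 * (g x)\<^sup>2 + 2 * (k x)\<^sup>2))"
        by (auto simp: indicator_def)
    qed
  qed
  then show ?thesis unfolding L2_01_def set_borel_measurable_def using m by simp
qed

lemma L2_norm_diff_le:
  assumes g: "L2_01 g" and gk: "L2_01 (\<lambda>x. g x - k x)" and K: "\<forall>x\<in>{0..1::real}. \<bar>k x\<bar> \<le> K"
  shows "L2_norm (\<lambda>x. g x - k x) \<le> L2_norm g + K"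
proof -
  have K0: "0 \<le> K" using K by (metis abs_ge_zero atLeastAtMost_iff order_trans zero_le_one order_refl)
  have ig2: "set_integrable lborel {0..1} (\<lambda>x. (g x)\<^sup>2)" using g unfolding L2_01_def by auto
  have igk: "set_integrable lborel {0..1} (\<lambda>x. (g x - k x)\<^sup>2)" using gk unfolding L2_01_def by auto
  have ig1: "set_integrable lborel {0..1} (\<lambda>x. \<bar>g x\<bar>)" by (rule set_integrable_abs[OF L2_set_integrable[OF g]])
  have ic: "set_integrable lborel {0..1::real} (\<lambda>x. K\<^sup>2)" by (rule cont_set_integrable) simp
  have "(LINT x:{0..1}|lborel. (g x - k x)\<^sup>2) \<le> (LINT x:{0..1}|lborel. (g x)\<^sup>2 + 2 * K * \<bar>g x\<bar> + K\<^sup>2)"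
  proof (rule set_integral_mono[OF igk])
    show "set_integrable lborel {0..1} (\<lambda>x. (g x)\<^sup>2 + 2 * K * \<bar>g x\<bar> + K\<^sup>2)"
      using ig2 ig1 ic by simp
    fix x :: real assume x: "x \<in> {0..1}"
    then have kx: "\<bar>k x\<bar> \<le> K" using K by auto
    have "(g x - k x)\<^sup>2 = (g x)\<^sup>2 - 2 * g x * k x + (k x)\<^sup>2" by (simp add: power2_eq_square algebra_simps)
    also have "- 2 * g x * k x \<le> 2 * K * \<bar>g x\<bar>"
    proof -
      have "- (g x * k x) \<le> \<bar>g x\<bar> * \<bar>k x\<bar>" by (metis abs_ge_minus_self abs_mult)
      also have "\<dots> \<le> \<bar>g x\<bar> * K" by (rule mult_left_mono[OF kx]) simp
      finally show ?thesis by (simp add: algebra_simps)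
    qed
    then have "(g x)\<^sup>2 - 2 * g x * k x + (k x)\<^sup>2 \<le> (g x)\<^sup>2 + 2 * K * \<bar>g x\<bar> + (k x)\<^sup>2" by simp
    also have "(k x)\<^sup>2 \<le> K\<^sup>2" using kx by (metis abs_ge_zero power2_abs power_mono)
    finally show "(g x - k x)\<^sup>2 \<le> (g x)\<^sup>2 + 2 * K * \<bar>g x\<bar> + K\<^sup>2" by simp
  qed
  also have "\<dots> = (LINT x:{0..1}|lborel. (g x)\<^sup>2) + 2 * K * (LINT x:{0..1}|lborel. \<bar>g x\<bar>) + K\<^sup>2"
    using ig2 ig1 ic by (simp add: set_integral_const_Icc)
  also have "\<dots> \<le> (L2_norm g)\<^sup>2 + 2 * K * L2_norm g + K\<^sup>2"
    using L1_le_L2[OF g] L2_sq[OF g] K0 by (simp add: mult_left_mono)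
  also have "\<dots> = (L2_norm g + K)\<^sup>2" by (simp add: power2_eq_square algebra_simps)
  finally have "sqrt (LINT x:{0..1}|lborel. (g x - k x)\<^sup>2) \<le> sqrt ((L2_norm g + K)\<^sup>2)"
    by (rule real_sqrt_le_mono)
  then show ?thesis unfolding L2_norm_def[of "\<lambda>x. g x - k x"] using K0 L2_norm_nonneg[of g] by simp
qed

lemma sqrt_sum_sq_le:
  assumes "0 \<le> a" "0 \<le> b" "a \<le> A" "b \<le> B"
  shows "sqrt (a\<^sup>2 + b\<^sup>2) \<le> A + B"
proof -
  have "a\<^sup>2 + b\<^sup>2 \<le> (A + B)\<^sup>2"
  proof -
    have "a\<^sup>2 \<le> A\<^sup>2" "b\<^sup>2 \<le> B\<^sup>2" using assms by (auto intro: power_mono)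
    moreover have "0 \<le> 2 * A * B" using assms by simp
    ultimately show ?thesis by (simp add: power2_eq_square algebra_simps)
  qed
  then have "sqrt (a\<^sup>2 + b\<^sup>2) \<le> sqrt ((A + B)\<^sup>2)" by (rule real_sqrt_le_mono)
  then show ?thesis using assms by simp
qed

lemma H1_norm_le:
  assumes "weak_deriv_01 u v" "L2_norm u \<le> A" "L2_norm v \<le> B"
  shows "H1_norm u \<le> A + B"
proof -
  have "weak_deriv_01 u (SOME v. weak_deriv_01 u v)" using assms(1) by (rule someI[where P="\<lambda>v. weak_deriv_01 u v"])
  then have "L2_norm (SOME v. weak_deriv_01 u v) = L2_norm v" using assms(1) by (rule wd_unique_norm)
  then show ?thesis unfolding H1_norm_def
    using sqrt_sum_sq_le[OF L2_norm_nonneg L2_norm_nonneg assms(2)] assms(3) by simp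
qed

lemma indef_bound_L2:
  assumes "L2_01 u" "x \<in> {0..1::real}"
  shows "\<bar>LINT t:{0..x}|lborel. u t\<bar> \<le> L2_norm u"
  using indef_bound[OF L2_set_integrable[OF assms(1)] assms(2)] L1_le_L2[OF assms(1)] by simp

lemma main_lemma:
  fixes d :: "real \<Rightarrow> real" and d0 d1 d2 p :: real and f g :: "real \<Rightarrow> real" and h0 h1 :: real
  assumes C1: "d C1_differentiable_on UNIV" and d00: "d 0 = 0" and d0: "d0 > 0" and d1: "d1 \<ge> 0"
    and d2: "d2 \<ge> 0" and p: "p \<ge> 0" and lo: "\<forall>s. deriv d s > d0"
    and bd: "\<forall>s. \<bar>deriv d s\<bar> \<le> d1 + d2 * rpow \<bar>s\<bar> p"
    and Lf: "L2_01 f" and Lg: "L2_01 g"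
  shows "\<exists>P m. H1_01 P \<and> H1_01 m \<and> weak_deriv_01 m f \<and>
            weak_deriv_01 P (\<lambda>x. g x - d (m x)) \<and> P 0 = h0 \<and> P 1 = h1 \<and>
            (\<forall>P' m'. H1_01 P' \<and> H1_01 m' \<and> weak_deriv_01 m' f \<and>
                     weak_deriv_01 P' (\<lambda>x. g x - d (m' x)) \<and> P' 0 = h0 \<and> P' 1 = h1
                     \<longrightarrow> (\<forall>x\<in>{0..1}. P' x = P x \<and> m' x = m x)) \<and>
            (let M = 2 / d0 * (L2_norm g + (\<bar>h0\<bar> + \<bar>h1\<bar>) + d1 * L2_norm f
                               + d2 * L2_norm f powr (p + 1)) + 2 * L2_norm f
             in H1_norm m \<le> M \<and>
                H1_norm P \<le> 2 * (L2_norm g + (\<bar>h0\<bar> + \<bar>h1\<bar>) + d1 * M + d2 * M powr (p + 1)))"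
proof -
  have dd: "\<And>s. (d has_real_derivative deriv d s) (at s)" by (rule C1_deriv[OF C1])
  have contd: "continuous_on UNIV d"
    by (rule continuous_at_imp_continuous_on) (use dd DERIV_isCont in blast)
  define Nf where "Nf = L2_norm f"
  define Ng where "Ng = L2_norm g"
  have Nf0: "0 \<le> Nf" unfolding Nf_def by (rule L2_norm_nonneg)
  have Ng0: "0 \<le> Ng" unfolding Ng_def by (rule L2_norm_nonneg)
  have iff: "set_integrable lborel {0..1} f" by (rule L2_set_integrable[OF Lf])
  have ig: "set_integrable lborel {0..1} g" by (rule L2_set_integrable[OF Lg])
  define F where "F x = (LINT t:{0..x}|lborel. f t)" for x
  have Fc: "continuous_on {0..1} F" unfolding F_def[abs_def] by (rule indef_cont[OF iff])
  have Fb: "\<bar>F x\<bar> \<le> Nf" if "x \<in> {0..1}" for x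
    unfolding F_def Nf_def by (rule indef_bound_L2[OF Lf that])
  have F0: "F 0 = 0" unfolding F_def by (rule LINT_zero_pt)
  have dFc: "continuous_on {0..1} (\<lambda>x. d (a + F x))" for a
    by (rule continuous_on_compose2[OF contd, of _ "\<lambda>x. a + F x"]) (auto intro!: continuous_intros Fc)
  have idF: "set_integrable lborel {0..1} (\<lambda>x. d (a + F x))" for a
    by (rule cont_set_integrable[OF dFc])
  define \<phi> where "\<phi> a = (LINT x:{0..1}|lborel. d (a + F x))" for a
  have \<phi>_mono: "\<phi> b - \<phi> a \<ge> d0 * (b - a)" if ab: "a \<le> b" for a b
  proof -
    have "\<phi> b - \<phi> a = (LINT x:{0..1}|lborel. d (b + F x) - d (a + F x))"
      unfolding \<phi>_def using idF[of a] idF[of b] by simp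
    also have "\<dots> \<ge> (LINT x:{0..1::real}|lborel. d0 * (b - a))"
    proof (rule set_integral_mono)
      show "set_integrable lborel {0..1::real} (\<lambda>x. d0 * (b - a))" by (rule cont_set_integrable) simp
      show "set_integrable lborel {0..1} (\<lambda>x. d (b + F x) - d (a + F x))" using idF[of a] idF[of b] by simp
      fix x show "d0 * (b - a) \<le> d (b + F x) - d (a + F x)"
        using d_lower[OF dd lo, of "a + F x" "b + F x"] ab by simp
    qed
    also have "(LINT x:{0..1::real}|lborel. d0 * (b - a)) = d0 * (b - a)" by (simp add: set_integral_const_Icc)
    finally show ?thesis .
  qed
  have \<phi>_lip: "\<bar>\<phi> a - \<phi> b\<bar> \<le> (d1 + d2 * rpow (R + Nf) p) * \<bar>a - b\<bar>" if "\<bar>a\<bar> \<le> R" "\<bar>b\<bar> \<le> R" for a b R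
  proof -
    have ih: "set_integrable lborel {0..1} (\<lambda>x. d (a + F x) - d (b + F x))" using idF[of a] idF[of b] by simp
    have "\<phi> a - \<phi> b = (LINT x:{0..1}|lborel. d (a + F x) - d (b + F x))"
      unfolding \<phi>_def using idF[of a] idF[of b] by simp
    then have "\<bar>\<phi> a - \<phi> b\<bar> \<le> (LINT x:{0..1}|lborel. \<bar>d (a + F x) - d (b + F x)\<bar>)"
      using indef_bound[OF ih, of 1] by simp
    also have "\<dots> \<le> (LINT x:{0..1::real}|lborel. (d1 + d2 * rpow (R + Nf) p) * \<bar>a - b\<bar>)"
    proof (rule set_integral_mono)
      show "set_integrable lborel {0..1::real} (\<lambda>x. (d1 + d2 * rpow (R + Nf) p) * \<bar>a - b\<bar>)"
        by (rule cont_set_integrable) simp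
      show "set_integrable lborel {0..1} (\<lambda>x. \<bar>d (a + F x) - d (b + F x)\<bar>)" using set_integrable_abs[OF ih] .
      fix x :: real assume x: "x \<in> {0..1}"
      have "\<bar>a + F x\<bar> \<le> R + Nf" "\<bar>b + F x\<bar> \<le> R + Nf" using Fb[OF x] that by auto
      from d_lip[OF dd bd d2 p this]
      show "\<bar>d (a + F x) - d (b + F x)\<bar> \<le> (d1 + d2 * rpow (R + Nf) p) * \<bar>a - b\<bar>" by simp
    qed
    also have "\<dots> = (d1 + d2 * rpow (R + Nf) p) * \<bar>a - b\<bar>" by (simp add: set_integral_const_Icc)
    finally show ?thesis .
  qed
  have \<phi>_cont: "continuous_on {-R..R} \<phi>" for R
  proof (rule lipschitz_on_continuous_on[of "d1 + d2 * rpow (R + Nf) p"], rule lipschitz_onI)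
    show "0 \<le> d1 + d2 * rpow (R + Nf) p" using d1 d2 rpow_nonneg by simp
    fix a b assume "a \<in> {-R..R}" "b \<in> {-R..R}"
    then have "\<bar>a\<bar> \<le> R" "\<bar>b\<bar> \<le> R" by auto
    then show "dist (\<phi> a) (\<phi> b) \<le> (d1 + d2 * rpow (R + Nf) p) * dist a b"
      using \<phi>_lip by (simp add: dist_real_def)
  qed
  define G where "G = (LINT x:{0..1}|lborel. g x)"
  define T where "T = h0 + G - h1"
  define R0 where "R0 = \<bar>T - \<phi> 0\<bar> / d0"
  have R00: "0 \<le> R0" unfolding R0_def using d0 by simp
  have "\<phi> R0 - \<phi> 0 \<ge> d0 * R0" using \<phi>_mono[OF R00] by simp
  then have up: "T \<le> \<phi> R0" unfolding R0_def using d0 by auto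
  have "\<phi> 0 - \<phi> (-R0) \<ge> d0 * R0" using \<phi>_mono[of "-R0" 0] R00 by simp
  then have down: "\<phi> (-R0) \<le> T" unfolding R0_def using d0 by auto
  obtain m0 where m0: "\<phi> m0 = T" "-R0 \<le> m0" "m0 \<le> R0"
    using IVT'[OF down up _ \<phi>_cont[of R0]] R00 by auto
  have \<phi>_inj: "a = b" if "\<phi> a = \<phi> b" for a b
  proof (rule ccontr)
    assume "a \<noteq> b"
    then consider "a < b" | "b < a" by linarith
    then show False
    proof cases
      case 1
      then have "0 < d0 * (b - a)" using d0 by simp
      then show False using \<phi>_mono[of a b] that 1 by simp
    next
      case 2
      then have "0 < d0 * (a - b)" using d0 by simp
      then show False using \<phi>_mono[of b a] that 2 by simp
    qed
  qed
  define S where "S = Ng + (\<bar>h0\<bar> + \<bar>h1\<bar>) + d1 * Nf + d2 * Nf powr (p + 1)"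
  have S0: "0 \<le> S" unfolding S_def using Ng0 Nf0 d1 d2 by simp
  have "\<bar>T - \<phi> 0\<bar> \<le> S"
  proof -
    have "\<bar>G\<bar> \<le> Ng" unfolding G_def Ng_def using indef_bound_L2[OF Lg, of 1] by simp
    have ih: "set_integrable lborel {0..1} (\<lambda>x. d (0 + F x))" by (rule idF)
    have "\<bar>\<phi> 0\<bar> \<le> (LINT x:{0..1}|lborel. \<bar>d (0 + F x)\<bar>)"
      unfolding \<phi>_def using indef_bound[OF ih, of 1] by simp
    also have "\<dots> \<le> (LINT x:{0..1::real}|lborel. d1 * Nf + d2 * Nf powr (p + 1))"
    proof (rule set_integral_mono)
      show "set_integrable lborel {0..1::real} (\<lambda>x. d1 * Nf + d2 * Nf powr (p + 1))"
        by (rule cont_set_integrable) simp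
      show "set_integrable lborel {0..1} (\<lambda>x. \<bar>d (0 + F x)\<bar>)" using set_integrable_abs[OF ih] .
      fix x :: real assume x: "x \<in> {0..1}"
      have "\<bar>d (F x)\<bar> \<le> d1 * \<bar>F x\<bar> + d2 * \<bar>F x\<bar> powr (p + 1)"
        by (rule d_growth[OF dd bd d2 p d00])
      also have "\<dots> \<le> d1 * Nf + d2 * Nf powr (p + 1)"
        using Fb[OF x] d1 d2 p by (intro add_mono mult_left_mono powr_mono2) auto
      finally show "\<bar>d (0 + F x)\<bar> \<le> d1 * Nf + d2 * Nf powr (p + 1)" by simp
    qed
    also have "\<dots> = d1 * Nf + d2 * Nf powr (p + 1)" by (simp add: set_integral_const_Icc)
    finally have "\<bar>\<phi> 0\<bar> \<le> d1 * Nf + d2 * Nf powr (p + 1)" .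
    then show ?thesis unfolding T_def S_def using \<open>\<bar>G\<bar> \<le> Ng\<close> by linarith
  qed
  have m0b: "\<bar>m0\<bar> \<le> S / d0"
  proof -
    have "d0 * \<bar>m0\<bar> \<le> \<bar>\<phi> m0 - \<phi> 0\<bar>"
    proof (cases "0 \<le> m0")
      case True then show ?thesis using \<phi>_mono[of 0 m0] by simp
    next
      case False then show ?thesis using \<phi>_mono[of m0 0] by simp
    qed
    then have "d0 * \<bar>m0\<bar> \<le> S" using m0(1) \<open>\<bar>T - \<phi> 0\<bar> \<le> S\<close> by simp
    then show ?thesis using d0 by (simp add: field_simps)
  qed
  define m where "m x = m0 + F x" for x
  have dm_cont: "continuous_on {0..1} (\<lambda>x. d (m x))" unfolding m_def by (rule dFc)
  have Lgk: "L2_01 (\<lambda>x. g x - d (m x))" by (rule L2_diff_cont[OF Lg dm_cont])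
  have igk: "set_integrable lborel {0..1} (\<lambda>x. g x - d (m x))" by (rule L2_set_integrable[OF Lgk])
  define P where "P x = h0 + (LINT t:{0..x}|lborel. g t - d (m t))" for x
  have m00: "m 0 = m0" unfolding m_def using F0 by simp
  have wm: "weak_deriv_01 m f"
    unfolding weak_deriv_01_def using Lf m00 by (simp add: m_def F_def)
  have P0: "P 0 = h0" unfolding P_def using LINT_zero_pt by simp
  have wP: "weak_deriv_01 P (\<lambda>x. g x - d (m x))"
    unfolding weak_deriv_01_def using Lgk P0 by (simp add: P_def)
  have P1: "P 1 = h1"
  proof -
    have "(LINT t:{0..1}|lborel. g t - d (m t)) = G - \<phi> m0"
      unfolding G_def \<phi>_def m_def using ig idF[of m0] by simp
    then show ?thesis unfolding P_def using m0(1) T_def by simp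
  qed
  have uniq: "\<forall>P' m'. H1_01 P' \<and> H1_01 m' \<and> weak_deriv_01 m' f \<and>
                     weak_deriv_01 P' (\<lambda>x. g x - d (m' x)) \<and> P' 0 = h0 \<and> P' 1 = h1
                     \<longrightarrow> (\<forall>x\<in>{0..1}. P' x = P x \<and> m' x = m x)"
  proof (intro allI impI)
    fix P' m' assume H: "H1_01 P' \<and> H1_01 m' \<and> weak_deriv_01 m' f \<and>
                     weak_deriv_01 P' (\<lambda>x. g x - d (m' x)) \<and> P' 0 = h0 \<and> P' 1 = h1"
    then have wm': "weak_deriv_01 m' f" and wP': "weak_deriv_01 P' (\<lambda>x. g x - d (m' x))"
      and P'0: "P' 0 = h0" and P'1: "P' 1 = h1" by auto
    define c where "c = m' 0"
    have m'eq: "\<forall>x\<in>{0..1}. m' x = c + F x" using wm' unfolding weak_deriv_01_def F_def c_def by blast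
    have P'eq: "P' x = h0 + (LINT t:{0..x}|lborel. g t - d (m' t))" if "x \<in> {0..1}" for x
    proof -
      have "P' x = P' 0 + (LINT t:{0..x}|lborel. g t - d (m' t))"
        using wP' that unfolding weak_deriv_01_def by blast
      then show ?thesis using P'0 by simp
    qed
    have "(LINT t:{0..1}|lborel. g t - d (m' t)) = (LINT t:{0..1}|lborel. g t - d (c + F t))"
      by (rule set_lebesgue_integral_cong) (use m'eq in auto)
    also have "\<dots> = G - \<phi> c"
      unfolding G_def \<phi>_def using ig idF[of c] by simp
    finally have "h1 = h0 + (G - \<phi> c)" using P'eq[of 1] P'1 by simp
    then have "\<phi> c = \<phi> m0" using m0(1) T_def by simp
    then have m'0: "c = m0" by (rule \<phi>_inj)
    have mm: "m' x = m x" if "x \<in> {0..1}" for x using m'eq that m'0 by (simp add: m_def)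
    show "\<forall>x\<in>{0..1}. P' x = P x \<and> m' x = m x"
    proof
      fix x :: real assume x: "x \<in> {0..1}"
      have "(LINT t:{0..x}|lborel. g t - d (m' t)) = (LINT t:{0..x}|lborel. g t - d (m t))"
        by (rule set_lebesgue_integral_cong) (use x in \<open>auto simp: mm\<close>)
      then have "P' x = P x" using P'eq[OF x] by (simp add: P_def)
      then show "P' x = P x \<and> m' x = m x" using mm[OF x] by simp
    qed
  qed
  define B where "B = S / d0 + Nf"
  define M where "M = 2 / d0 * S + 2 * Nf"
  have B0: "0 \<le> B" unfolding B_def using S0 d0 Nf0 by simp
  have Sd: "0 \<le> S / d0" using S0 d0 by simp
  have SM: "2 / d0 * S = 2 * (S / d0)" by simp
  have BM: "B \<le> M" unfolding B_def M_def using Sd SM Nf0 by linarith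
  have mb: "\<forall>x\<in>{0..1}. \<bar>m x\<bar> \<le> B"
  proof
    fix x :: real assume x: "x \<in> {0..1}"
    show "\<bar>m x\<bar> \<le> B" unfolding m_def B_def using m0b Fb[OF x] by simp
  qed
  have Hm: "H1_norm m \<le> M"
  proof -
    have "H1_norm m \<le> B + Nf"
      by (rule H1_norm_le[OF wm L2_norm_le_bound[OF mb B0]]) (simp add: Nf_def)
    also have "\<dots> \<le> M" unfolding B_def M_def using Sd SM Nf0 by linarith
    finally show ?thesis .
  qed
  define K where "K = d1 * M + d2 * M powr (p + 1)"
  have M0: "0 \<le> M" using B0 BM by simp
  have K0: "0 \<le> K" unfolding K_def using d1 d2 M0 by simp
  have kb: "\<forall>x\<in>{0..1}. \<bar>d (m x)\<bar> \<le> K"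
  proof
    fix x :: real assume x: "x \<in> {0..1}"
    have mM: "\<bar>m x\<bar> \<le> M" using mb x BM by force
    have "\<bar>d (m x)\<bar> \<le> d1 * \<bar>m x\<bar> + d2 * \<bar>m x\<bar> powr (p + 1)"
      by (rule d_growth[OF dd bd d2 p d00])
    also have "\<dots> \<le> K"
      unfolding K_def using mM d1 d2 p by (intro add_mono mult_left_mono powr_mono2) auto
    finally show "\<bar>d (m x)\<bar> \<le> K" .
  qed
  have L2gk: "L2_norm (\<lambda>x. g x - d (m x)) \<le> Ng + K"
    unfolding Ng_def by (rule L2_norm_diff_le[OF Lg Lgk kb])
  have Pb: "\<forall>x\<in>{0..1}. \<bar>P x\<bar> \<le> \<bar>h0\<bar> + (Ng + K)"
  proof
    fix x :: real assume x: "x \<in> {0..1}"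
    have "\<bar>LINT t:{0..x}|lborel. g t - d (m t)\<bar> \<le> L2_norm (\<lambda>x. g x - d (m x))"
      by (rule indef_bound_L2[OF Lgk x])
    then show "\<bar>P x\<bar> \<le> \<bar>h0\<bar> + (Ng + K)" unfolding P_def using L2gk by linarith
  qed
  have HP: "H1_norm P \<le> 2 * (Ng + (\<bar>h0\<bar> + \<bar>h1\<bar>) + K)"
  proof -
    have "H1_norm P \<le> (\<bar>h0\<bar> + (Ng + K)) + (Ng + K)"
      by (rule H1_norm_le[OF wP L2_norm_le_bound[OF Pb] L2gk]) (use Ng0 K0 in simp)
    also have "\<dots> \<le> 2 * (Ng + (\<bar>h0\<bar> + \<bar>h1\<bar>) + K)" using Ng0 K0 by simp
    finally show ?thesis .
  qed
  have eqM: "2 / d0 * (L2_norm g + (\<bar>h0\<bar> + \<bar>h1\<bar>) + d1 * L2_norm f + d2 * L2_norm f powr (p + 1)) + 2 * L2_norm f = M"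
    unfolding M_def S_def Nf_def Ng_def ..
  have H1P: "H1_01 P" unfolding H1_01_def using wP by blast
  have H1m: "H1_01 m" unfolding H1_01_def using wm by blast
  show ?thesis
    unfolding Let_def eqM
    apply (rule exI[of _ P], rule exI[of _ m])
    apply (intro conjI)
            apply (rule H1P)
           apply (rule H1m)
          apply (rule wm)
         apply (rule wP)
        apply (rule P0)
       apply (rule P1)
      apply (rule uniq)
     apply (rule Hm)
    using HP unfolding K_def Ng_def by (simp add: add.assoc)
qed


theorem lemma1:
  "\<exists>c>0. \<forall>(d::real \<Rightarrow> real) (d0::real) (d1::real) (d2::real) (p::real)
            (f::real \<Rightarrow> real) (g::real \<Rightarrow> real) (h0::real) (h1::real).
     d C1_differentiable_on UNIV \<and> d 0 = 0 \<and> d0 > 0 \<and> d1 \<ge> 0 \<and> d2 \<ge> 0 \<and> p \<ge> 0 \<and>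
     (\<forall>s. deriv d s > d0) \<and> (\<forall>s. \<bar>deriv d s\<bar> \<le> d1 + d2 * rpow \<bar>s\<bar> p) \<and>
     L2_01 f \<and> L2_01 g
     \<longrightarrow>
     (\<exists>P m. H1_01 P \<and> H1_01 m \<and> weak_deriv_01 m f \<and>
            weak_deriv_01 P (\<lambda>x. g x - d (m x)) \<and> P 0 = h0 \<and> P 1 = h1 \<and>
            (\<forall>P' m'. H1_01 P' \<and> H1_01 m' \<and> weak_deriv_01 m' f \<and>
                     weak_deriv_01 P' (\<lambda>x. g x - d (m' x)) \<and> P' 0 = h0 \<and> P' 1 = h1
                     \<longrightarrow> (\<forall>x\<in>{0..1}. P' x = P x \<and> m' x = m x)) \<and>
            (let M = c / d0 * (L2_norm g + (\<bar>h0\<bar> + \<bar>h1\<bar>) + d1 * L2_norm f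
                               + d2 * L2_norm f powr (p + 1)) + c * L2_norm f
             in H1_norm m \<le> M \<and>
                H1_norm P \<le> c * (L2_norm g + (\<bar>h0\<bar> + \<bar>h1\<bar>) + d1 * M + d2 * M powr (p + 1))))"
  apply (rule exI[of _ "2::real"])
  apply (rule conjI)
   apply simp
  apply (intro allI impI)
  apply (rule main_lemma)
           apply (elim conjE, assumption)+
  done

end
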